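(* Let $M,N$ be relatively prime positive integers. Then every unit norm tight frame $\Phi=\{\varphi_n\}_{n=1}^N\subseteq\mathbb{R}^M$ yields almost injective intensity measurements, i.e., the map $\mathcal{A}\colon\mathbb{R}^M/\{\pm1\}\to\mathbb{R}^N$, $(\mathcal{A}(x))(n):=|\langle x,\varphi_n\rangle|^2$, satisfies $\mathcal{A}^{-1}(\mathcal{A}(x))=\{\pm x\}$ for almost every $x\in\mathbb{R}^M$.
   Context: A unit norm tight frame is a collection $\{\varphi_n\}_{n=1}^N\subseteq\mathbb{R}^M$ with $\|\varphi_n\|=1$ for all $n$ and a constant $A>0$ such that $\sum_{n=1}^N|\langle x,\varphi_n\rangle|^2=A\|x\|^2$ for all $x\in\mathbb{R}^M$ (equivalently $\Phi\Phi^*=\frac{N}{M}I$ where $\Phi$ is the matrix with columns $\varphi_n$). *)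

theory Defs
  imports "HOL-Analysis.Analysis"
begin

definition unit_norm_tight_frame :: "nat \<Rightarrow> (nat \<Rightarrow> real ^ 'm) \<Rightarrow> bool" where
  "unit_norm_tight_frame N \<phi> \<longleftrightarrow>
     (\<forall>n<N. norm (\<phi> n) = 1) \<and>
     (\<exists>A>0. \<forall>x::real ^ 'm. (\<Sum>n<N. \<bar>x \<bullet> \<phi> n\<bar>^2) = A * (norm x)^2)"

definition intensity :: "nat \<Rightarrow> (nat \<Rightarrow> real ^ 'm) \<Rightarrow> real ^ 'm \<Rightarrow> (nat \<Rightarrow> real)" where
  "intensity N \<phi> x = (\<lambda>n. if n < N then \<bar>x \<bullet> \<phi> n\<bar>^2 else 0)"

end

theory Submission
  imports Defs
begin

lemma frame_op:
  fixes \<phi> :: "nat \<Rightarrow> real ^ 'm"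
  assumes tight: "\<And>x::real^'m. (\<Sum>n<N. \<bar>x \<bullet> \<phi> n\<bar>^2) = A * (norm x)^2"
  shows "(\<Sum>n<N. (w \<bullet> \<phi> n) *\<^sub>R \<phi> n) = A *\<^sub>R w"
proof (rule vector_eq_rdot[THEN iffD1], rule allI)
  fix z
  have h1: "(\<Sum>n<N. ((w \<bullet> \<phi> n) + (z \<bullet> \<phi> n))^2) = A * ((w+z) \<bullet> (w+z))"
    using tight[of "w+z"] by (simp add: inner_add_left power2_norm_eq_inner)
  have h2: "(\<Sum>n<N. ((w \<bullet> \<phi> n) - (z \<bullet> \<phi> n))^2) = A * ((w-z) \<bullet> (w-z))"
    using tight[of "w-z"] by (simp add: inner_diff_left power2_norm_eq_inner)
  have "(\<Sum>n<N. ((w \<bullet> \<phi> n) + (z \<bullet> \<phi> n))^2) - (\<Sum>n<N. ((w \<bullet> \<phi> n) - (z \<bullet> \<phi> n))^2)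
      = (\<Sum>n<N. 4 * ((w \<bullet> \<phi> n) * (z \<bullet> \<phi> n)))"
    by (simp add: sum_subtractf[symmetric] power2_eq_square algebra_simps)
  also have "\<dots> = 4 * (\<Sum>n<N. (w \<bullet> \<phi> n) * (z \<bullet> \<phi> n))"
    by (simp add: sum_distrib_left)
  finally have "4 * (\<Sum>n<N. (w \<bullet> \<phi> n) * (z \<bullet> \<phi> n)) = A * ((w+z) \<bullet> (w+z)) - A * ((w-z) \<bullet> (w-z))"
    using h1 h2 by simp
  also have "\<dots> = 4 * (A * (w \<bullet> z))"
    by (simp add: inner_add_left inner_add_right inner_diff_left inner_diff_right inner_commute algebra_simps)
  finally have "(\<Sum>n<N. (w \<bullet> \<phi> n) * (z \<bullet> \<phi> n)) = A * (w \<bullet> z)" by simp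
  then show "(\<Sum>n<N. (w \<bullet> \<phi> n) *\<^sub>R \<phi> n) \<bullet> z = (A *\<^sub>R w) \<bullet> z"
  proof -
    have "(\<Sum>n<N. (w \<bullet> \<phi> n) *\<^sub>R \<phi> n) \<bullet> z = (\<Sum>n<N. (w \<bullet> \<phi> n) * (z \<bullet> \<phi> n))"
      unfolding inner_sum_left inner_scaleR_left by (simp add: inner_commute[of "\<phi> _" z])
    then show ?thesis using \<open>(\<Sum>n<N. (w \<bullet> \<phi> n) * (z \<bullet> \<phi> n)) = A * (w \<bullet> z)\<close> by simp
  qed
qed

lemma counting:
  fixes \<phi> :: "nat \<Rightarrow> real ^ 'm"
  assumes tight: "\<And>x::real^'m. (\<Sum>n<N. \<bar>x \<bullet> \<phi> n\<bar>^2) = A * (norm x)^2"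
    and unit: "\<And>n. n < N \<Longrightarrow> norm (\<phi> n) = 1"
    and S: "S \<subseteq> {..<N}"
    and orthB: "pairwise orthogonal B" and nB: "\<And>b. b \<in> B \<Longrightarrow> norm b = 1" and fB: "finite B"
    and inB: "\<And>n. n \<in> S \<Longrightarrow> \<phi> n \<in> span B"
    and out: "\<And>b n. b \<in> B \<Longrightarrow> n < N \<Longrightarrow> n \<notin> S \<Longrightarrow> b \<bullet> \<phi> n = 0"
  shows "real (card S) = A * real (card B)"
proof -
  have fS: "finite S" using S finite_subset by blast
  have pars: "\<phi> n \<bullet> \<phi> n = (\<Sum>b\<in>B. (b \<bullet> \<phi> n)^2)" if "n \<in> S" for n
  proof -
    have e: "(\<Sum>b\<in>B. (\<phi> n \<bullet> b) *\<^sub>R b) = \<phi> n"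
      by (rule orthonormal_basis_expand[OF orthB nB inB[OF that] fB])
    have "\<phi> n \<bullet> \<phi> n = \<phi> n \<bullet> (\<Sum>b\<in>B. (\<phi> n \<bullet> b) *\<^sub>R b)" using e by simp
    also have "\<dots> = (\<Sum>b\<in>B. (b \<bullet> \<phi> n)^2)"
      by (simp add: inner_sum_right inner_commute power2_eq_square)
    finally show ?thesis .
  qed
  have "real (card S) = (\<Sum>n\<in>S. \<phi> n \<bullet> \<phi> n)"
    using unit S by (simp add: power2_norm_eq_inner[symmetric] subset_iff)
  also have "\<dots> = (\<Sum>n\<in>S. \<Sum>b\<in>B. (b \<bullet> \<phi> n)^2)" using pars by simp
  also have "\<dots> = (\<Sum>b\<in>B. \<Sum>n\<in>S. (b \<bullet> \<phi> n)^2)" by (rule sum.swap)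
  also have "\<dots> = (\<Sum>b\<in>B. \<Sum>n<N. (b \<bullet> \<phi> n)^2)"
  proof (rule sum.cong[OF refl])
    fix b assume b: "b \<in> B"
    show "(\<Sum>n\<in>S. (b \<bullet> \<phi> n)^2) = (\<Sum>n<N. (b \<bullet> \<phi> n)^2)"
      by (rule sum.mono_neutral_left) (use S out[OF b] in auto)
  qed
  also have "\<dots> = (\<Sum>b\<in>B. A)"
    using tight nB by simp
  also have "\<dots> = A * real (card B)" by simp
  finally show ?thesis .
qed


lemma key:
  fixes \<phi> :: "nat \<Rightarrow> real ^ 'm"
  assumes tight: "\<And>x::real^'m. (\<Sum>n<N. \<bar>x \<bullet> \<phi> n\<bar>^2) = A * (norm x)^2"
    and Apos: "A > 0"
    and unit: "\<And>n. n < N \<Longrightarrow> norm (\<phi> n) = 1"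
    and cop: "coprime CARD('m) N"
    and S: "S \<subseteq> {..<N}"
    and u: "u \<noteq> 0" "\<And>n. n \<in> S \<Longrightarrow> u \<bullet> \<phi> n = 0"
    and v: "v \<noteq> 0" "\<And>n. n < N \<Longrightarrow> n \<notin> S \<Longrightarrow> v \<bullet> \<phi> n = 0"
  shows "{a + b |a b. (\<forall>n\<in>S. a \<bullet> \<phi> n = 0) \<and> (\<forall>n\<in>{..<N}-S. b \<bullet> \<phi> n = 0)} \<noteq> UNIV"
proof
  assume eq: "{a + b |a b. (\<forall>n\<in>S. a \<bullet> \<phi> n = 0) \<and> (\<forall>n\<in>{..<N}-S. b \<bullet> \<phi> n = 0)} = UNIV"
  define W1 where "W1 = span (\<phi> ` S)"
  define W2 where "W2 = span (\<phi> ` ({..<N}-S))"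
  have inter: "w = 0" if "w \<in> W1" "w \<in> W2" for w
  proof -
    have "w \<in> {a + b |a b. (\<forall>n\<in>S. a \<bullet> \<phi> n = 0) \<and> (\<forall>n\<in>{..<N}-S. b \<bullet> \<phi> n = 0)}"
      using eq by simp
    then obtain a b where ab: "w = a + b" "\<forall>n\<in>S. a \<bullet> \<phi> n = 0" "\<forall>n\<in>{..<N}-S. b \<bullet> \<phi> n = 0"
      by blast
    have "orthogonal a w"
      by (rule orthogonal_to_span[OF that(1)[unfolded W1_def]]) (use ab in \<open>auto simp: orthogonal_def\<close>)
    moreover have "orthogonal b w"
      by (rule orthogonal_to_span[OF that(2)[unfolded W2_def]]) (use ab in \<open>auto simp: orthogonal_def\<close>)
    ultimately have "w \<bullet> w = 0" using ab(1)
      by (simp add: orthogonal_def inner_add_left inner_commute)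
    then show ?thesis by simp
  qed
  have orth: "w \<bullet> \<phi> m = 0" if w: "w \<in> W1" and m: "m < N" "m \<notin> S" for w m
  proof -
    define T1 where "T1 = (\<Sum>n\<in>S. (w \<bullet> \<phi> n) *\<^sub>R \<phi> n)"
    define T2 where "T2 = (\<Sum>n\<in>{..<N}-S. (w \<bullet> \<phi> n) *\<^sub>R \<phi> n)"
    have "T1 + T2 = (\<Sum>n<N. (w \<bullet> \<phi> n) *\<^sub>R \<phi> n)"
      unfolding T1_def T2_def
      using sum.subset_diff[OF S finite_lessThan, of "\<lambda>n. (w \<bullet> \<phi> n) *\<^sub>R \<phi> n"]
      by (simp only: add.commute)
    also have "\<dots> = A *\<^sub>R w" by (rule frame_op[OF tight])
    finally have "T1 + T2 = A *\<^sub>R w" .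
    hence T2e: "T2 = A *\<^sub>R w - T1" by (simp add: algebra_simps)
    have "T1 \<in> W1" unfolding T1_def W1_def
      by (intro span_sum span_scale span_base) auto
    hence "T2 \<in> W1" using T2e w unfolding W1_def by (simp add: span_diff span_scale)
    moreover have "T2 \<in> W2" unfolding T2_def W2_def
      by (intro span_sum span_scale span_base) auto
    ultimately have "T2 = 0" using inter by blast
    hence "w \<bullet> T2 = 0" by simp
    hence "(\<Sum>n\<in>{..<N}-S. (w \<bullet> \<phi> n)^2) = 0"
      unfolding T2_def by (simp add: inner_sum_right power2_eq_square)
    hence "\<forall>n\<in>{..<N}-S. (w \<bullet> \<phi> n)^2 = 0"
      by (subst (asm) sum_nonneg_eq_0_iff) auto
    then show ?thesis using m by auto
  qed
  obtain B where B: "B \<subseteq> W1" "pairwise orthogonal B" "\<And>x. x \<in> B \<Longrightarrow> norm x = 1"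
      "independent B" "span B = W1"
    using orthonormal_basis_subspace[of W1] unfolding W1_def by (metis subspace_span)
  have fB: "finite B" using B(4) independent_imp_finite by blast
  have c1: "real (card S) = A * real (card B)"
    by (rule counting[OF tight unit S B(2) B(3) fB])
       (use B W1_def orth in \<open>auto intro: span_base simp: inner_commute\<close>)
  have c2: "real (card {..<N}) = A * real (card (Basis :: (real^'m) set))"
    by (rule counting[OF tight unit _ orthogonal_Basis])
       (auto simp: norm_Basis)
  have c2': "real N = A * real CARD('m)" using c2 by simp
  have fS: "finite S" using S finite_subset by blast
  have M0: "CARD('m) > 0" by simp
  have rel: "card S * CARD('m) = N * card B"
  proof -
    have "real (card S) * real CARD('m) = real N * real (card B)"
      using c1 c2' by simp
    then show ?thesis by (metis of_nat_eq_iff of_nat_mult)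
  qed
  show False
  proof (cases "card B = 0")
    case True
    hence "card S = 0" using rel M0 by simp
    hence "S = {}" using fS by simp
    hence "(\<Sum>n<N. \<bar>v \<bullet> \<phi> n\<bar>^2) = 0" using v(2) by simp
    hence "A * (norm v)^2 = 0" using tight by simp
    thus False using Apos v(1) by simp
  next
    case False
    show False
    proof (cases "card B \<ge> CARD('m)")
      case True
      hence "card S * CARD('m) \<ge> N * CARD('m)" using rel by simp
      hence "card S \<ge> N" using M0 by simp
      moreover have "card S \<le> N" using card_mono[OF _ S] by simp
      ultimately have "S = {..<N}" by (intro card_subset_eq[OF finite_lessThan S]) simp
      hence "(\<Sum>n<N. \<bar>u \<bullet> \<phi> n\<bar>^2) = 0" using u(2) by simp
      hence "A * (norm u)^2 = 0" using tight by simp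
      thus False using Apos u(1) by simp
    next
      case False2: False
      have "CARD('m) dvd N * card B" using rel by (metis dvd_triv_right)
      hence "CARD('m) dvd card B" using cop coprime_dvd_mult_right_iff by blast
      thus False using False False2 by (simp add: nat_dvd_not_less)
    qed
  qed
qed

theorem theorem13:
  fixes \<phi> :: "nat \<Rightarrow> real ^ 'm" and N :: nat
  assumes "N > 0"
    and "coprime CARD('m) N"
    and "unit_norm_tight_frame N \<phi>"
  shows "AE x in lebesgue. {y. intensity N \<phi> y = intensity N \<phi> x} = {x, -x}"
proof -
  obtain A where Apos: "A > 0" and tight: "\<And>x::real^'m. (\<Sum>n<N. \<bar>x \<bullet> \<phi> n\<bar>^2) = A * (norm x)^2"
    and unit: "\<And>n. n < N \<Longrightarrow> norm (\<phi> n) = 1"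
    using assms(3) unfolding unit_norm_tight_frame_def by blast
  define P where "P S = {a + b |a b. (\<forall>n\<in>S. a \<bullet> \<phi> n = 0) \<and> (\<forall>n\<in>{..<N}-S. b \<bullet> \<phi> n = 0)}" for S
  define F where "F = P ` {S. S \<subseteq> {..<N} \<and> P S \<noteq> UNIV}"
  have subP: "subspace (P S)" for S
  proof -
    have "subspace {a::real^'m. \<forall>n\<in>S. a \<bullet> \<phi> n = 0}"
      by (auto simp: subspace_def inner_add_left)
    moreover have "subspace {b::real^'m. \<forall>n\<in>{..<N}-S. b \<bullet> \<phi> n = 0}"
      by (auto simp: subspace_def inner_add_left)
    ultimately show ?thesis unfolding P_def using subspace_sums by fastforce
  qed
  have negF: "negligible (\<Union>F)"
  proof (rule negligible_Union)
    show "finite F" unfolding F_def by auto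
  next
    fix T assume "T \<in> F"
    then obtain S where T: "T = P S" "P S \<noteq> UNIV" unfolding F_def by auto
    have "dim T \<le> DIM(real^'m)" by (rule dim_subset_UNIV)
    moreover have "dim T \<noteq> DIM(real^'m)"
    proof
      assume "dim T = DIM(real^'m)"
      hence "span T = UNIV" using dim_eq_full by metis
      hence "T = UNIV" using subP T(1) span_eq_iff by metis
      thus False using T by simp
    qed
    ultimately show "negligible T" by (intro negligible_lowdim) simp
  qed
  show ?thesis
  proof (rule AE_I')
    show "\<Union>F \<in> null_sets lebesgue" using negF negligible_iff_null_sets by blast
  next
    show "{x \<in> space lebesgue. {y. intensity N \<phi> y = intensity N \<phi> x} \<noteq> {x, -x}} \<subseteq> \<Union>F"
    proof
      fix x assume "x \<in> {x \<in> space lebesgue. {y. intensity N \<phi> y = intensity N \<phi> x} \<noteq> {x, -x}}"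
      hence ne: "{y. intensity N \<phi> y = intensity N \<phi> x} \<noteq> {x, -x}" by simp
      have "intensity N \<phi> (-x) = intensity N \<phi> x"
        unfolding intensity_def inner_minus_left abs_minus_cancel by (rule refl)
      hence "-x \<in> {y. intensity N \<phi> y = intensity N \<phi> x}" by simp
      then obtain y where y: "intensity N \<phi> y = intensity N \<phi> x" "y \<noteq> x" "y \<noteq> -x"
        using ne by auto
      have sq: "(x \<bullet> \<phi> n)^2 = (y \<bullet> \<phi> n)^2" if "n < N" for n
        using fun_cong[OF y(1), of n] that by (simp add: intensity_def)
      have fac: "((x + y) \<bullet> \<phi> n) * ((x - y) \<bullet> \<phi> n) = 0" if "n < N" for n
        using sq[OF that] by (simp add: inner_add_left inner_diff_left power2_eq_square algebra_simps)
      define S where "S = {n. n < N \<and> (x + y) \<bullet> \<phi> n = 0}"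
      have S: "S \<subseteq> {..<N}" unfolding S_def by auto
      have u0: "x + y \<noteq> 0" using y(3) by (metis add.inverse_unique add.commute)
      have v0: "x - y \<noteq> 0" using y(2) by simp
      have vS: "(x - y) \<bullet> \<phi> n = 0" if "n < N" "n \<notin> S" for n
        using fac[OF that(1)] that unfolding S_def by auto
      have PS: "P S \<noteq> UNIV" unfolding P_def
        by (rule key[OF tight Apos unit assms(2) S u0 _ v0 vS]) (auto simp: S_def)
      have "x \<in> P S" unfolding P_def
      proof (intro CollectI exI conjI)
        show "x = (1/2) *\<^sub>R (x + y) + (1/2) *\<^sub>R (x - y)"
        proof -
          have "(1/2) *\<^sub>R (x + y) + (1/2) *\<^sub>R (x - y) = (1/2) *\<^sub>R ((x + y) + (x - y))"
            by (simp only: scaleR_add_right)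
          also have "(x + y) + (x - y) = (2::real) *\<^sub>R x" by (simp add: scaleR_2)
          finally show ?thesis by simp
        qed
        show "\<forall>n\<in>S. ((1/2) *\<^sub>R (x + y)) \<bullet> \<phi> n = 0" by (simp add: S_def)
        show "\<forall>n\<in>{..<N}-S. ((1/2) *\<^sub>R (x - y)) \<bullet> \<phi> n = 0" using vS by simp
      qed
      thus "x \<in> \<Union>F" using S PS unfolding F_def by blast
    qed
  qed
qed

end
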